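(* Let $C\subset\mathbb{R}^n$ be a pointed, $n$-dimensional closed convex cone. If $K_j$ ($j\in\mathbb{N}$) and $K$ are $C$-pseudo-cones with $K_j\to K$, then $\gamma^n(K_j)\to\gamma^n(K)$.
   Context: $C^{\circ}=\{x:\langle x,y\rangle\le 0\ \forall y\in C\}$. A pseudo-cone is a nonempty closed convex set $K$ with $o\notin K$ and $\lambda K\subseteq K$ for $\lambda\ge1$; it is a $C$-pseudo-cone if its recession cone $\{z:K+z\subseteq K\}$ equals $C$. $\gamma^n$ is the standard Gaussian probability measure on $\mathbb{R}^n$. Fix a unit vector $\mathfrak{v}\in\operatorname{int}C\cap\operatorname{int}(-C^{\circ})$ and for $t>0$ let $C^-(t)=C\cap\{x:\langle x,\mathfrak v\rangle\le t\}$, $K^-(t)=K\cap C^-(t)$. A sequence of $C$-pseudo-cones $K_j$ converges to a $C$-pseudo-cone $K$ if there is $t_0>0$ with $K_j^-(t_0)\neq\emptyset$ for all $j$ and $K_j^-(t)\to K^-(t)$ in the Hausdorff metric for all $t\ge t_0$. *)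

theory Defs
  imports "HOL-Analysis.Analysis"
begin

definition polar_cone :: "'a::euclidean_space set \<Rightarrow> 'a set" where
  "polar_cone C = {x. \<forall>y\<in>C. x \<bullet> y \<le> 0}"

definition pointed_cone :: "'a::euclidean_space set \<Rightarrow> bool" where
  "pointed_cone C \<longleftrightarrow> C \<inter> uminus ` C = {0}"

definition full_closed_convex_pointed_cone :: "'a::euclidean_space set \<Rightarrow> bool" where
  "full_closed_convex_pointed_cone C \<longleftrightarrow>
     closed C \<and> convex C \<and> cone C \<and> C \<noteq> {} \<and> pointed_cone C \<and> aff_dim C = int DIM('a)"

definition recession_cone :: "'a::euclidean_space set \<Rightarrow> 'a set" where
  "recession_cone K = {z. (\<lambda>x. x + z) ` K \<subseteq> K}"

definition pseudo_cone :: "'a::euclidean_space set \<Rightarrow> bool" where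
  "pseudo_cone K \<longleftrightarrow> K \<noteq> {} \<and> closed K \<and> convex K \<and> 0 \<notin> K \<and>
     (\<forall>l::real. l \<ge> 1 \<longrightarrow> (\<lambda>x. l *\<^sub>R x) ` K \<subseteq> K)"

definition C_pseudo_cone :: "'a::euclidean_space set \<Rightarrow> 'a set \<Rightarrow> bool" where
  "C_pseudo_cone C K \<longleftrightarrow> pseudo_cone K \<and> recession_cone K = C"

definition lower_part :: "'a::euclidean_space set \<Rightarrow> 'a \<Rightarrow> real \<Rightarrow> 'a set" where
  "lower_part C v t = C \<inter> {x. x \<bullet> v \<le> t}"

text \<open>Hausdorff distance (used on nonempty compact sets)\<close>
definition hausdorff_dist :: "'a::metric_space set \<Rightarrow> 'a set \<Rightarrow> real" where
  "hausdorff_dist A B = max (SUP a\<in>A. infdist a B) (SUP b\<in>B. infdist b A)"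

definition pc_converges ::
  "'a::euclidean_space set \<Rightarrow> 'a \<Rightarrow> (nat \<Rightarrow> 'a set) \<Rightarrow> 'a set \<Rightarrow> bool" where
  "pc_converges C v Ks K \<longleftrightarrow>
     (\<exists>t0>0. (\<forall>j. Ks j \<inter> lower_part C v t0 \<noteq> {}) \<and>
       (\<forall>t\<ge>t0. K \<inter> lower_part C v t \<noteq> {} \<and>
          (\<lambda>j. hausdorff_dist (Ks j \<inter> lower_part C v t) (K \<inter> lower_part C v t))
            \<longlonglongrightarrow> 0))"

definition gaussian :: "'a::euclidean_space measure" where
  "gaussian = density lborel
     (\<lambda>x. ennreal ((2 * pi) powr (- real DIM('a) / 2) * exp (- (norm x)\<^sup>2 / 2)))"

end

theory Submission
  imports Defs "HOL-Probability.Probability"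
begin

lemma infdist_geI:
  fixes x :: "'a::metric_space"
  assumes "A \<noteq> {}" "\<And>a. a \<in> A \<Longrightarrow> r \<le> dist x a"
  shows "r \<le> infdist x A"
  using assms by (simp add: infdist_notempty cINF_greatest)

lemma haus_ge1:
  fixes A B :: "'a::real_normed_vector set"
  assumes "bounded A" "B \<noteq> {}" "a \<in> A"
  shows "infdist a B \<le> hausdorff_dist A B"
proof -
  obtain b0 where b0: "b0 \<in> B" using assms by auto
  obtain M where M: "\<And>x. x \<in> A \<Longrightarrow> norm x \<le> M" using assms(1) bounded_iff by metis
  have "bdd_above ((\<lambda>a. infdist a B) ` A)"
  proof (rule bdd_aboveI2)
    fix x assume "x \<in> A"
    have "infdist x B \<le> dist x b0" using b0 infdist_le by blast
    also have "\<dots> \<le> norm x + norm b0" by (simp add: dist_norm norm_triangle_ineq4)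
    also have "\<dots> \<le> M + norm b0" using M \<open>x \<in> A\<close> by simp
    finally show "infdist x B \<le> M + norm b0" .
  qed
  then have "infdist a B \<le> (SUP a\<in>A. infdist a B)" using assms(3) by (rule cSUP_upper2) simp
  then show ?thesis unfolding hausdorff_dist_def by linarith
qed

lemma haus_ge2:
  fixes A B :: "'a::real_normed_vector set"
  assumes "bounded B" "A \<noteq> {}" "b \<in> B"
  shows "infdist b A \<le> hausdorff_dist A B"
proof -
  have "infdist b A \<le> hausdorff_dist B A" by (rule haus_ge1[OF assms])
  then show ?thesis unfolding hausdorff_dist_def by linarith
qed

lemma pc_subset_C:
  assumes "C_pseudo_cone C K"
  shows "K \<subseteq> C"
proof
  fix x assume x: "x \<in> K"
  have "(\<lambda>y. y + x) ` K \<subseteq> K"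
  proof
    fix z assume "z \<in> (\<lambda>y. y + x) ` K"
    then obtain y where y: "y \<in> K" "z = y + x" by auto
    have cv: "convex K" and sc: "\<And>l::real. l \<ge> 1 \<Longrightarrow> (\<lambda>x. l *\<^sub>R x) ` K \<subseteq> K"
      using assms unfolding C_pseudo_cone_def pseudo_cone_def by auto
    have m: "(1/2) *\<^sub>R y + (1/2) *\<^sub>R x \<in> K"
      using cv y x unfolding convex_def by (metis add_divide_distrib div_self
         field_sum_of_halves less_eq_real_def zero_less_divide_1_iff zero_less_numeral)
    have "2 *\<^sub>R ((1/2) *\<^sub>R y + (1/2) *\<^sub>R x) \<in> K" using sc[of 2] m by auto
    moreover have "2 *\<^sub>R ((1/2) *\<^sub>R y + (1/2) *\<^sub>R x) = z" using y by (simp add: scaleR_add_right)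
    ultimately show "z \<in> K" by simp
  qed
  then show "x \<in> C" using assms unfolding C_pseudo_cone_def recession_cone_def by auto
qed

lemma lower_bounded:
  assumes "v \<in> interior (uminus ` polar_cone C)"
  shows "bounded (lower_part C v t)"
proof -
  obtain e where e: "e > 0" "ball v e \<subseteq> uminus ` polar_cone C"
    using assms by (meson open_contains_ball open_interior interior_subset subset_trans)
  have key: "(e/2) * norm y \<le> y \<bullet> v" if y: "y \<in> C" for y
  proof (cases "y = 0")
    case True then show ?thesis by simp
  next
    case False
    define w where "w = v - ((e/2) / norm y) *\<^sub>R y"
    have "dist v w = e/2" using False e by (simp add: w_def dist_norm)
    then have "w \<in> ball v e" using e by simp
    then have "w \<in> uminus ` polar_cone C" using e by auto
    then have "(- w) \<bullet> y \<le> 0" using y unfolding polar_cone_def by auto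
    then have "0 \<le> w \<bullet> y" by simp
    also have "w \<bullet> y = v \<bullet> y - (e/2) * norm y"
      using False by (simp add: w_def inner_diff_left power2_norm_eq_inner[symmetric] power2_eq_square)
    finally show ?thesis by (simp add: inner_commute)
  qed
  show ?thesis unfolding bounded_iff
  proof (intro exI ballI)
    fix x assume "x \<in> lower_part C v t"
    then have "x \<in> C" "x \<bullet> v \<le> t" by (auto simp: lower_part_def)
    then have "(e/2) * norm x \<le> t" using key by fastforce
    then show "norm x \<le> 2 * t / e" using e by (simp add: field_simps)
  qed
qed


lemma gauss_1d_finite: "(\<integral>\<^sup>+y. ennreal (exp (- y\<^sup>2 / 2)) \<partial>lborel) < \<infinity>"
proof -
  have "integrable lborel (\<lambda>x::real. std_normal_density x * x ^ 0)"
    by (rule integrable_std_normal_moment)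
  then have "integrable lborel (\<lambda>x::real. sqrt (2*pi) * std_normal_density x)" by simp
  moreover have "(\<lambda>x::real. sqrt (2*pi) * std_normal_density x) = (\<lambda>y. exp (- y\<^sup>2 / 2))"
    by (simp add: std_normal_density_def fun_eq_iff)
  ultimately have "integrable lborel (\<lambda>y::real. exp (- y\<^sup>2 / 2))" by simp
  then show ?thesis by (simp add: integrable_iff_bounded)
qed

lemma gaussian_finite: "finite_measure (gaussian :: 'a::euclidean_space measure)"
proof
  define c :: real where "c = (2 * pi) powr (- real DIM('a) / 2)"
  have eq: "ennreal (c * exp (- (norm x)\<^sup>2 / 2)) = ennreal c * (\<Prod>b\<in>Basis. ennreal (exp (- (x \<bullet> b)\<^sup>2 / 2)))"
    for x :: 'a
  proof -
    have "(norm x)\<^sup>2 = (\<Sum>b\<in>Basis. (x \<bullet> b)\<^sup>2)"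
      using euclidean_inner[of x x] by (simp add: power2_norm_eq_inner[symmetric] power2_eq_square)
    then have "exp (- (norm x)\<^sup>2 / 2) = (\<Prod>b\<in>Basis. exp (- (x \<bullet> b)\<^sup>2 / 2))"
      by (simp add: exp_sum[symmetric] sum_negf sum_divide_distrib)
    then show ?thesis
      by (simp add: c_def ennreal_mult prod_nonneg prod_ennreal)
  qed
  have "emeasure (gaussian :: 'a measure) (space gaussian) = (\<integral>\<^sup>+x. ennreal (c * exp (- (norm x)\<^sup>2 / 2)) \<partial>(lborel::'a measure))"
    unfolding gaussian_def c_def by (simp add: emeasure_density)
  also have "\<dots> = ennreal c * (\<integral>\<^sup>+x. (\<Prod>b\<in>Basis. ennreal (exp (- (x \<bullet> b)\<^sup>2 / 2))) \<partial>(lborel::'a measure))"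
    unfolding eq by (rule nn_integral_cmult) measurable
  also have "\<dots> = ennreal c * (\<Prod>b\<in>(Basis::'a set). (\<integral>\<^sup>+y. ennreal (exp (- y\<^sup>2 / 2)) \<partial>lborel))"
    by (subst nn_integral_lborel_prod) auto
  also have "\<dots> < \<infinity>"
    using gauss_1d_finite by (simp add: ennreal_mult_less_top power_less_top_ennreal)
  finally show "emeasure (gaussian :: 'a measure) (space gaussian) \<noteq> \<infinity>" by simp
qed


theorem lemma3p8:
  fixes C :: "'a::euclidean_space set" and v :: 'a
    and Ks :: "nat \<Rightarrow> 'a set" and K :: "'a set"
  assumes "full_closed_convex_pointed_cone C"
    and "norm v = 1" and "v \<in> interior C" and "v \<in> interior (uminus ` polar_cone C)"
    and "\<And>j. C_pseudo_cone C (Ks j)" and "C_pseudo_cone C K"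
    and "pc_converges C v Ks K"
  shows "(\<lambda>j. measure gaussian (Ks j)) \<longlonglongrightarrow> measure gaussian K"
proof -
  define L where "L t = lower_part C v t" for t
  obtain t0 where t0: "t0 > 0" and ne0: "\<And>j. Ks j \<inter> L t0 \<noteq> {}"
    and conv: "\<And>t. t \<ge> t0 \<Longrightarrow> K \<inter> L t \<noteq> {} \<and>
          (\<lambda>j. hausdorff_dist (Ks j \<inter> L t) (K \<inter> L t)) \<longlonglongrightarrow> 0"
    using assms(7) unfolding pc_converges_def L_def by blast
  have Lmono: "L s \<subseteq> L t" if "s \<le> t" for s t
    using that by (auto simp: L_def lower_part_def)
  have Lb: "bounded (L t)" for t
    unfolding L_def by (rule lower_bounded[OF assms(4)])
  have neKs: "Ks j \<inter> L t \<noteq> {}" if "t \<ge> t0" for j t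
    using ne0[of j] Lmono[OF that] by blast
  have KsC: "Ks j \<subseteq> C" for j by (rule pc_subset_C[OF assms(5)])
  have KC: "K \<subseteq> C" by (rule pc_subset_C[OF assms(6)])
  have Kcl: "closed K" and Kcv: "convex K"
    using assms(6) unfolding C_pseudo_cone_def pseudo_cone_def by auto
  have Kscl: "closed (Ks j)" and Kscv: "convex (Ks j)" and Ksne: "Ks j \<noteq> {}" for j
    using assms(5)[of j] unfolding C_pseudo_cone_def pseudo_cone_def by auto
  have evlt: "eventually (\<lambda>j. hausdorff_dist (Ks j \<inter> L t) (K \<inter> L t) < e) sequentially"
    if "t \<ge> t0" "e > 0" for t e
    using conv[OF that(1)] that(2) by (auto dest: order_tendstoD(2))
  have outK: "eventually (\<lambda>j. x \<notin> Ks j) sequentially" if x: "x \<notin> K" for x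
  proof -
    obtain r where r: "r > 0" "ball x r \<subseteq> - K"
      using Kcl x by (meson ComplI open_Compl open_contains_ball)
    have rK: "r \<le> dist x y" if "y \<in> K" for y
      using r that by (metis ComplD mem_ball not_le subsetD)
    define t where "t = max t0 (x \<bullet> v)"
    have tt: "t \<ge> t0" by (simp add: t_def)
    show ?thesis using evlt[OF tt r(1)]
    proof eventually_elim
      case (elim j)
      show "x \<notin> Ks j"
      proof
        assume xj: "x \<in> Ks j"
        then have "x \<in> Ks j \<inter> L t" using KsC by (auto simp: L_def lower_part_def t_def)
        moreover have "r \<le> infdist x (K \<inter> L t)"
          by (rule infdist_geI) (use conv[OF tt] rK in auto)
        moreover have "infdist x (K \<inter> L t) \<le> hausdorff_dist (Ks j \<inter> L t) (K \<inter> L t)"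
        proof (rule haus_ge1)
          show "bounded (Ks j \<inter> L t)" by (rule bounded_subset[OF Lb]) auto
          show "K \<inter> L t \<noteq> {}" using conv[OF tt] by blast
        qed fact
        ultimately have "r \<le> hausdorff_dist (Ks j \<inter> L t) (K \<inter> L t)" by linarith
        then show False using elim by simp
      qed
    qed
  qed
  have inK: "eventually (\<lambda>j. x \<in> Ks j) sequentially" if x: "x \<in> interior K" for x
  proof -
    obtain r where r: "r > 0" "ball x r \<subseteq> K"
      using x by (meson open_contains_ball open_interior interior_subset subset_trans)
    define t where "t = max t0 (norm x + r)"
    have tt: "t \<ge> t0" by (simp add: t_def)
    have r2: "r/2 > 0" using r by simp
    show ?thesis using evlt[OF tt r2]
    proof eventually_elim
      case (elim j)
      show "x \<in> Ks j"
      proof (rule ccontr)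
        assume xj: "x \<notin> Ks j"
        obtain a b where ab: "a \<bullet> x < b" "\<And>y. y \<in> Ks j \<Longrightarrow> b < a \<bullet> y"
          using separating_hyperplane_closed_point[OF Kscv Kscl xj] by blast
        have a0: "a \<noteq> 0"
        proof
          assume "a = 0"
          moreover obtain y where "y \<in> Ks j" using Ksne by blast
          ultimately show False using ab by fastforce
        qed
        then have na: "norm a > 0" by simp
        define z where "z = x - ((r/2) / norm a) *\<^sub>R a"
        have dz: "dist x z = r/2" using na r by (simp add: z_def dist_norm)
        then have "z \<in> K" using r by auto
        moreover have "norm z \<le> norm x + r/2"
          using dz norm_triangle_ineq2[of z x] by (simp add: dist_norm norm_minus_commute)
        moreover have "z \<bullet> v \<le> norm z"
          using Cauchy_Schwarz_ineq2[of z v] assms(2) by simp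
        ultimately have zL: "z \<in> K \<inter> L t"
          using KC r by (auto simp: L_def lower_part_def t_def)
        have az: "a \<bullet> z = a \<bullet> x - (r/2) * norm a"
          using na by (simp add: z_def inner_diff_right power2_norm_eq_inner[symmetric] power2_eq_square)
        have "r/2 \<le> infdist z (Ks j \<inter> L t)"
        proof (rule infdist_geI)
          show "Ks j \<inter> L t \<noteq> {}" by (rule neKs[OF tt])
        next
          fix y assume "y \<in> Ks j \<inter> L t"
          then have "b < a \<bullet> y" using ab by auto
          then have "(r/2) * norm a < a \<bullet> (y - z)" using ab az by (simp add: inner_diff_right)
          also have "\<dots> \<le> norm a * norm (y - z)" using Cauchy_Schwarz_ineq2[of a "y - z"] by linarith
          finally have "r/2 < norm (y - z)" using na by (simp add: mult.commute)
          then show "r/2 \<le> dist z y" by (simp add: dist_norm norm_minus_commute)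
        qed
        also have "\<dots> \<le> hausdorff_dist (Ks j \<inter> L t) (K \<inter> L t)"
          by (rule haus_ge2[OF bounded_subset[OF Lb] neKs[OF tt] zL]) auto
        finally show False using elim by simp
      qed
    qed
  qed
  have ptw: "(\<lambda>j. indicator (Ks j) x :: real) \<longlonglongrightarrow> indicator K x" if "x \<notin> frontier K" for x
  proof (cases "x \<in> K")
    case True
    then have "x \<in> interior K" using that Kcl by (simp add: frontier_def closure_closed)
    from inK[OF this] have "eventually (\<lambda>j. indicator (Ks j) x = (indicator K x :: real)) sequentially"
      by eventually_elim (use True in simp)
    then show ?thesis by (rule tendsto_eventually)
  next
    case False
    from outK[OF this] have "eventually (\<lambda>j. indicator (Ks j) x = (indicator K x :: real)) sequentially"
      by eventually_elim (use False in simp)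
    then show ?thesis by (rule tendsto_eventually)
  qed
  have fnull: "frontier K \<in> null_sets lborel"
  proof -
    have "negligible (frontier K)" by (rule negligible_convex_frontier[OF Kcv])
    then have "frontier K \<in> null_sets lebesgue" by (simp add: negligible_iff_null_sets)
    moreover have "frontier K \<in> sets lborel" by simp
    ultimately show ?thesis by (simp add: null_sets_completion_iff)
  qed
  have AEl: "AE x in lborel. x \<notin> frontier K"
    using fnull by (rule AE_not_in)
  have sg: "sets (gaussian :: 'a measure) = sets borel"
    by (simp add: gaussian_def)
  have AEg: "AE x in gaussian. (\<lambda>j. indicator (Ks j) x :: real) \<longlonglongrightarrow> indicator K x"
  proof -
    let ?f = "\<lambda>x::'a. ennreal ((2 * pi) powr (- real DIM('a) / 2) * exp (- (norm x)\<^sup>2 / 2))"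
    have fm: "?f \<in> borel_measurable lborel" by measurable
    have "AE x in lborel. 0 < ?f x \<longrightarrow> (\<lambda>j. indicator (Ks j) x :: real) \<longlonglongrightarrow> indicator K x"
      using AEl by eventually_elim (blast intro: ptw)
    then show ?thesis unfolding gaussian_def using AE_density[OF fm] by blast
  qed
  interpret fm: finite_measure "gaussian :: 'a measure" by (rule gaussian_finite)
  have sp: "space (gaussian :: 'a measure) = UNIV" by (simp add: gaussian_def)
  have "(\<lambda>j. integral\<^sup>L gaussian (indicator (Ks j) :: 'a \<Rightarrow> real)) \<longlonglongrightarrow> integral\<^sup>L gaussian (indicator K)"
  proof (rule integral_dominated_convergence[where w="\<lambda>_. 1"])
    show "indicator K \<in> borel_measurable gaussian"
      using Kcl by (simp add: measurable_cong_sets[OF sg refl] borel_measurable_indicator)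
    show "indicator (Ks j) \<in> borel_measurable gaussian" for j
      using Kscl by (simp add: measurable_cong_sets[OF sg refl] borel_measurable_indicator)
    show "integrable (gaussian :: 'a measure) (\<lambda>_. 1::real)" by (rule fm.integrable_const)
    show "AE x in gaussian. norm (indicator (Ks j) x :: real) \<le> 1" for j
      by (simp add: indicator_def)
  qed (rule AEg)
  then show ?thesis by (simp add: sp)
qed

end
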